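(* The category $\mathrm{OS}_B^{\mathrm{op}}$ is Gröbner, and, with the norm $\nu([-n,n])=n$, it is $\mathsf{O}$-lingual with respect to the maps $\iota_{(E,\sigma)}:|(\mathrm{OS}_B^{\mathrm{op}})_{(E,\sigma)}|\to E^\star$.
   Context: $\mathrm{OS}_B$: objects $(E,\sigma)$ with $E$ totally ordered finite, $\sigma$ an order-reversing involution with unique fixed point $0$; $-e:=\sigma(e)$, $E^+=\{e>0\}$, $|e|=\max\{\pm e\}$, $\mathrm{init}\,D=\min\{|e|:e\in D\}$; morphisms are surjective equivariant maps with (i) $\mathrm{init}\,\varphi^{-1}(e)\in\varphi^{-1}(e)$ for $e\in E_2^+$ and (ii) $\mathrm{init}\,\varphi^{-1}(e)<\mathrm{init}\,\varphi^{-1}(f)$ for $e<f\in E_2^+$. Every object is uniquely isomorphic to some $[-n,n]$. For a category $\mathcal C$ and object $x$, morphisms $\varphi:x\to y$, $\varphi':x\to y'$ satisfy $\varphi\le\varphi'$ if $\varphi'=\psi\circ\varphi$ for some $\psi$; $|\mathcal C_x|$ is the poset of equivalence classes. $\mathcal C$ is directed if its only endomorphisms are identities; it has (G1) if for every $x$ there is a well order $\prec$ on the set of (isomorphism classes of) morphisms out of $x$ with $\varphi\prec\varphi'\Rightarrow\psi\circ\varphi\prec\psi\circ\varphi'$ whenever defined; (G2) if every $|\mathcal C_x|$ is Noetherian (every upward-closed subset has finitely many minimal elements); Gröbner means directed with (G1) and (G2). A norm $\nu$ assigns a natural number to each isomorphism class of objects; $\mathcal C$ is $\mathsf{O}$-lingual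 if for each $x$ there are a finite set $\Sigma_x$ and an injection $\iota_x:|\mathcal C_x|\to\Sigma_x^\star$ such that $\iota_x(\varphi:x\to y)$ has length $\nu(y)$ and $\iota_x(I)$ is an ordered language for every upward-closed $I$. Ordered languages on $\Sigma$: the smallest collection of subsets of $\Sigma^\star$ containing singletons and $\Pi^\star$ ($\Pi\subset\Sigma$) and closed under finite unions and concatenations. Here $\Sigma_{(E,\sigma)}=E$ and, for an $\mathrm{OS}_B$-morphism $\varphi:[-n,n]\to(E,\sigma)$ (a morphism out of $(E,\sigma)$ in $\mathrm{OS}_B^{\mathrm{op}}$), $\iota_{(E,\sigma)}(\varphi)=\varphi(1)\cdots\varphi(n)$. *)

theory Defs
  imports Main
begin

text \<open>We work in the skeleton of OS_B: the object [-n,n] (integers, with the involution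
  e \<mapsto> -e) is represented by the natural number n.  An OS_B-morphism
  [-m,m] \<rightarrow> [-n,n] is represented by a function f :: int \<Rightarrow> int which is 0 outside [-m,m].\<close>

definition preim :: "nat \<Rightarrow> (int \<Rightarrow> int) \<Rightarrow> int \<Rightarrow> int set" where
  "preim m f e = {d \<in> {- int m .. int m}. f d = e}"

definition init :: "int set \<Rightarrow> int" where
  "init D = Min (abs ` D)"

definition osb_mor :: "nat \<Rightarrow> nat \<Rightarrow> (int \<Rightarrow> int) \<Rightarrow> bool" where
  "osb_mor m n f \<longleftrightarrow>
     f ` {- int m .. int m} = {- int n .. int n}
   \<and> (\<forall>e. \<not> \<bar>e\<bar> \<le> int m \<longrightarrow> f e = 0)
   \<and> (\<forall>e \<in> {- int m .. int m}. f (- e) = - f e)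
   \<and> (\<forall>e \<in> {1 .. int n}. init (preim m f e) \<in> preim m f e)
   \<and> (\<forall>e \<in> {1 .. int n}. \<forall>e' \<in> {1 .. int n}. e < e' \<longrightarrow>
         init (preim m f e) < init (preim m f e'))"

text \<open>Morphisms out of [-n,n] in OS_B^op: pairs (m, f) with f an OS_B-morphism [-m,m] \<rightarrow> [-n,n].\<close>
definition mors_out :: "nat \<Rightarrow> (nat \<times> (int \<Rightarrow> int)) set" where
  "mors_out n = {(m, f). osb_mor m n f}"

text \<open>phi \<le> phi' in OS_B^op out of [-n,n]: phi' = psi \<circ> phi (op-composition), i.e. f' = f \<circ> g in OS_B.\<close>
definition op_le :: "nat \<times> (int \<Rightarrow> int) \<Rightarrow> nat \<times> (int \<Rightarrow> int) \<Rightarrow> bool" where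
  "op_le \<phi> \<phi>' \<longleftrightarrow> (\<exists>g. osb_mor (fst \<phi>') (fst \<phi>) g \<and> snd \<phi>' = snd \<phi> \<circ> g)"

definition directed_OSB_op :: bool where
  "directed_OSB_op \<longleftrightarrow>
     (\<forall>n f. osb_mor n n f \<longrightarrow> f = (\<lambda>e. if \<bar>e\<bar> \<le> int n then e else 0))"

definition G1_OSB_op :: bool where
  "G1_OSB_op \<longleftrightarrow> (\<forall>n. \<exists>r. well_order_on (mors_out n) r \<and>
     (\<forall>m k f f' g. osb_mor m n f \<longrightarrow> osb_mor m n f' \<longrightarrow> osb_mor k m g \<longrightarrow>
        ((m, f), (m, f')) \<in> r - Id \<longrightarrow> ((k, f \<circ> g), (k, f' \<circ> g)) \<in> r - Id))"

text \<open>Noetherian (as in the paper): every upward-closed subset of the poset of equivalence classes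
  has finitely many minimal elements.  Stated on the underlying preorder.\<close>
definition upclosed :: "'a set \<Rightarrow> ('a \<Rightarrow> 'a \<Rightarrow> bool) \<Rightarrow> 'a set \<Rightarrow> bool" where
  "upclosed A le I \<longleftrightarrow> I \<subseteq> A \<and> (\<forall>x\<in>I. \<forall>y\<in>A. le x y \<longrightarrow> y \<in> I)"

definition eq_class :: "'a set \<Rightarrow> ('a \<Rightarrow> 'a \<Rightarrow> bool) \<Rightarrow> 'a \<Rightarrow> 'a set" where
  "eq_class A le x = {y \<in> A. le x y \<and> le y x}"

definition noetherian_preorder :: "'a set \<Rightarrow> ('a \<Rightarrow> 'a \<Rightarrow> bool) \<Rightarrow> bool" where
  "noetherian_preorder A le \<longleftrightarrow> (\<forall>I. upclosed A le I \<longrightarrow>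
      finite (eq_class A le ` {x \<in> I. \<forall>y \<in> I. le y x \<longrightarrow> le x y}))"

definition G2_OSB_op :: bool where
  "G2_OSB_op \<longleftrightarrow> (\<forall>n. noetherian_preorder (mors_out n) op_le)"

definition groebner_OSB_op :: bool where
  "groebner_OSB_op \<longleftrightarrow> directed_OSB_op \<and> G1_OSB_op \<and> G2_OSB_op"

inductive_set ordlang :: "'a set \<Rightarrow> 'a list set set" for \<Sigma> :: "'a set" where
  single: "w \<in> lists \<Sigma> \<Longrightarrow> {w} \<in> ordlang \<Sigma>"
| star: "\<Pi> \<subseteq> \<Sigma> \<Longrightarrow> lists \<Pi> \<in> ordlang \<Sigma>"
| empty: "{} \<in> ordlang \<Sigma>"
| union: "A \<in> ordlang \<Sigma> \<Longrightarrow> B \<in> ordlang \<Sigma> \<Longrightarrow> A \<union> B \<in> ordlang \<Sigma>"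
| concat: "A \<in> ordlang \<Sigma> \<Longrightarrow> B \<in> ordlang \<Sigma> \<Longrightarrow> {u @ v | u v. u \<in> A \<and> v \<in> B} \<in> ordlang \<Sigma>"

definition iota :: "nat \<times> (int \<Rightarrow> int) \<Rightarrow> int list" where
  "iota \<phi> = map (snd \<phi>) [1 .. int (fst \<phi>)]"

text \<open>O-lingual w.r.t. the norm nu([-m,m]) = m, alphabets Sigma = [-n,n] and the maps iota.\<close>
definition O_lingual_OSB_op :: bool where
  "O_lingual_OSB_op \<longleftrightarrow> (\<forall>n.
      (\<forall>\<phi> \<in> mors_out n. set (iota \<phi>) \<subseteq> {- int n .. int n} \<and> length (iota \<phi>) = fst \<phi>)
    \<and> (\<forall>\<phi> \<in> mors_out n. \<forall>\<phi>' \<in> mors_out n.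
          iota \<phi> = iota \<phi>' \<longleftrightarrow> (op_le \<phi> \<phi>' \<and> op_le \<phi>' \<phi>))
    \<and> (\<forall>I. upclosed (mors_out n) op_le I \<longrightarrow> iota ` I \<in> ordlang {- int n .. int n}))"

end

theory Submission imports Defs "HOL-Library.Sublist" "HOL-Library.Infinite_Set" begin


definition hgood :: "('a \<Rightarrow> 'a \<Rightarrow> bool) \<Rightarrow> 'a set \<Rightarrow> bool" where
  "hgood P A \<longleftrightarrow> (\<forall>s::nat \<Rightarrow> 'a. (\<forall>i. s i \<in> A) \<longrightarrow> (\<exists>i j. i < j \<and> P (s i) (s j)))"

lemma hgoodD: "hgood P A \<Longrightarrow> (\<And>i. (s :: nat \<Rightarrow> 'a) i \<in> A) \<Longrightarrow> \<exists>i j. i < j \<and> P (s i) (s j)"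
  unfolding hgood_def by blast

lemma hgood_mono: "hgood P A \<Longrightarrow> B \<subseteq> A \<Longrightarrow> hgood P B"
  unfolding hgood_def by blast

lemma hgood_inf_index:
  assumes g: "hgood P A" and K: "infinite (K :: nat set)" and s: "\<And>i. i \<in> K \<Longrightarrow> s i \<in> A"
  shows "\<exists>i j. i \<in> K \<and> j \<in> K \<and> i < j \<and> P (s i) (s j)"
proof -
  have "\<forall>i. (s \<circ> enumerate K) i \<in> A" using s enumerate_in_set[OF K] by auto
  from hgoodD[OF g, of "s \<circ> enumerate K"] this obtain i j where "i < j" "P (s (enumerate K i)) (s (enumerate K j))"
    by auto
  then show ?thesis using enumerate_in_set[OF K] enumerate_mono[OF _ K] by blast
qed

lemma hgood_Un:
  assumes gA: "hgood P A" and gB: "hgood P B"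
  shows "hgood P (A \<union> B)"
  unfolding hgood_def
proof (intro allI impI)
  fix s :: "nat \<Rightarrow> _" assume s: "\<forall>i. s i \<in> A \<union> B"
  have "{i. s i \<in> A} \<union> {i. s i \<in> B} = UNIV" using s by auto
  hence "infinite ({i. s i \<in> A} \<union> {i. s i \<in> B})" by simp
  hence "infinite {i. s i \<in> A} \<or> infinite {i. s i \<in> B}" by (metis finite_Un)
  then show "\<exists>i j. i < j \<and> P (s i) (s j)"
  proof
    assume inf: "infinite {i. s i \<in> A}"
    have "\<exists>i j. i \<in> {i. s i \<in> A} \<and> j \<in> {i. s i \<in> A} \<and> i < j \<and> P (s i) (s j)"
      by (rule hgood_inf_index[OF gA inf]) simp
    thus ?thesis by blast
  next
    assume inf: "infinite {i. s i \<in> B}"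
    have "\<exists>i j. i \<in> {i. s i \<in> B} \<and> j \<in> {i. s i \<in> B} \<and> i < j \<and> P (s i) (s j)"
      by (rule hgood_inf_index[OF gB inf]) simp
    thus ?thesis by blast
  qed
qed

lemma hgood_chain:
  fixes s :: "nat \<Rightarrow> 'a"
  assumes g: "hgood P A" and s: "\<And>i. s i \<in> A"
  shows "\<exists>\<phi>. (\<forall>k. \<phi> k < \<phi> (Suc k) \<and> P (s (\<phi> k)) (s (\<phi> (Suc k))))"
proof -
  define T where "T = {i. \<forall>j>i. \<not> P (s i) (s j)}"
  have "finite T"
  proof (rule ccontr)
    assume "infinite T"
    from hgood_inf_index[OF g this] s obtain i j where "i \<in> T" "i < j" "P (s i) (s j)" by blast
    then show False unfolding T_def by auto
  qed
  then obtain N where "\<forall>i\<in>T. i < N" using \<open>finite T\<close> finite_nat_set_iff_bounded by blast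
  hence N: "\<forall>i\<ge>N. i \<notin> T" by auto
  hence N': "\<And>i. i \<ge> N \<Longrightarrow> \<exists>j>i. P (s i) (s j)" unfolding T_def by auto
  define \<phi> where "\<phi> = rec_nat N (\<lambda>_ i. SOME j. j > i \<and> P (s i) (s j))"
  have ge: "\<phi> k \<ge> N" for k
  proof (induction k)
    case 0 then show ?case by (simp add: \<phi>_def)
  next
    case (Suc k)
    have eq: "\<phi> (Suc k) = (SOME j. j > \<phi> k \<and> P (s (\<phi> k)) (s j))" by (simp add: \<phi>_def)
    have "\<phi> (Suc k) > \<phi> k" by (subst eq, rule conjunct1[OF someI_ex[OF N'[OF Suc]]])
    with Suc show ?case by linarith
  qed
  have "\<phi> k < \<phi> (Suc k) \<and> P (s (\<phi> k)) (s (\<phi> (Suc k)))" for k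
  proof -
    have eq: "\<phi> (Suc k) = (SOME j. j > \<phi> k \<and> P (s (\<phi> k)) (s j))" by (simp add: \<phi>_def)
    show ?thesis unfolding eq by (rule someI_ex[OF N'[OF ge[of k]]])
  qed
  then show ?thesis by (intro exI[of _ \<phi>]) blast
qed

lemma hgood_prod:
  assumes gA: "hgood P A" and tP: "\<And>x y z. x \<in> A \<Longrightarrow> y \<in> A \<Longrightarrow> z \<in> A \<Longrightarrow> P x y \<Longrightarrow> P y z \<Longrightarrow> P x z"
    and gB: "hgood Q B"
  shows "hgood (\<lambda>x y. P (fst x) (fst y) \<and> Q (snd x) (snd y)) (A \<times> B)"
proof (unfold hgood_def, intro allI impI)
  fix s :: "nat \<Rightarrow> _" assume s: "\<forall>i. s i \<in> A \<times> B"
  from hgood_chain[OF gA, of "fst \<circ> s"] s obtain \<phi> where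
    ph: "\<forall>k. \<phi> k < \<phi> (Suc k) \<and> P (fst (s (\<phi> k))) (fst (s (\<phi> (Suc k))))" by (auto simp: mem_Times_iff)
  have mono: "\<phi> i < \<phi> j" if "i < j" for i j
    using that proof (induction j)
    case (Suc j) then show ?case using ph less_Suc_eq by (metis less_trans)
  qed simp
  have chain: "P (fst (s (\<phi> i))) (fst (s (\<phi> j)))" if "i < j" for i j
    using that proof (induction j)
    case (Suc j)
    show ?case
    proof (cases "i = j")
      case True then show ?thesis using ph by simp
    next
      case False
      with Suc have "P (fst (s (\<phi> i))) (fst (s (\<phi> j)))" by simp
      moreover have "P (fst (s (\<phi> j))) (fst (s (\<phi> (Suc j))))" using ph by blast
      moreover have "fst (s k) \<in> A" for k using s by (auto simp: mem_Times_iff)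
      ultimately show ?thesis using tP by blast
    qed
  qed simp
  from hgoodD[OF gB, of "\<lambda>i. snd (s (\<phi> i))"] s obtain i j where "i < j" "Q (snd (s (\<phi> i))) (snd (s (\<phi> j)))"
    by (auto simp: mem_Times_iff)
  with chain mono show "\<exists>i j. i < j \<and> P (fst (s i)) (fst (s j)) \<and> Q (snd (s i)) (snd (s j))" by blast
qed

lemma hgood_image:
  assumes g: "hgood R C" and h: "\<And>x y. x \<in> C \<Longrightarrow> y \<in> C \<Longrightarrow> R x y \<Longrightarrow> P (h x) (h y)"
  shows "hgood P (h ` C)"
proof (unfold hgood_def, intro allI impI)
  fix s :: "nat \<Rightarrow> _" assume s: "\<forall>i. s i \<in> h ` C"
  define t where "t i = (SOME x. x \<in> C \<and> s i = h x)" for i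
  have t: "t i \<in> C \<and> s i = h (t i)" for i
  proof -
    have "\<exists>x. x \<in> C \<and> s i = h x" using s by blast
    then show ?thesis unfolding t_def by (rule someI_ex)
  qed
  have "\<forall>i. t i \<in> C" using t by blast
  from hgoodD[OF g, of t, OF spec[OF this]] obtain i j where ij: "i < j" "R (t i) (t j)" by blast
  have "P (h (t i)) (h (t j))" using h[OF _ _ ij(2)] t by blast
  then have "P (s i) (s j)" using t by simp
  with ij show "\<exists>i j. i < j \<and> P (s i) (s j)" by blast
qed

definition Nset :: "'a set \<Rightarrow> 'a list \<Rightarrow> 'a list set" where
  "Nset A x = {w \<in> lists A. \<not> subseq x w}"

lemma Nset_good:
  assumes "\<forall>a\<in>set x. hgood subseq (lists (A - {a}))"
  shows "hgood subseq (Nset A x)"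
  using assms
proof (induction x)
  case Nil
  then show ?case by (simp add: Nset_def hgood_def)
next
  case (Cons a x)
  have IH: "hgood subseq (Nset A x)" using Cons by simp
  have ga: "hgood subseq (lists (A - {a}))" using Cons by simp
  have sub: "Nset A (a # x) \<subseteq> lists (A - {a}) \<union> (\<lambda>p. fst p @ a # snd p) ` (lists (A - {a}) \<times> Nset A x)"
  proof
    fix w assume w: "w \<in> Nset A (a # x)"
    show "w \<in> lists (A - {a}) \<union> (\<lambda>p. fst p @ a # snd p) ` (lists (A - {a}) \<times> Nset A x)"
    proof (cases "a \<in> set w")
      case False then show ?thesis using w by (auto simp: Nset_def)
    next
      case True
      then obtain v w' where vw: "w = v @ a # w'" "a \<notin> set v" by (meson split_list_first)
      have "\<not> subseq x w'"
      proof
        assume "subseq x w'"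
        hence "subseq (a # x) (a # w')" by simp
        hence "subseq (a # x) (v @ a # w')" by (rule list_emb_append2)
        with w vw show False by (simp add: Nset_def)
      qed
      then have "(v, w') \<in> lists (A - {a}) \<times> Nset A x" using w vw by (auto simp: Nset_def)
      then show ?thesis using vw by (auto intro!: image_eqI[of _ _ "(v,w')"])
    qed
  qed
  have "hgood (\<lambda>x y. subseq (fst x) (fst y) \<and> subseq (snd x) (snd y)) (lists (A - {a}) \<times> Nset A x)"
    by (rule hgood_prod[OF ga _ IH]) (meson subseq_order.order_trans)
  hence "hgood subseq ((\<lambda>p. fst p @ a # snd p) ` (lists (A - {a}) \<times> Nset A x))"
    by (rule hgood_image) (simp add: list_emb_append_mono)
  with ga show ?case by (rule hgood_mono[OF hgood_Un sub])
qed

lemma higman: "finite A \<Longrightarrow> hgood subseq (lists A)"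
proof (induction "card A" arbitrary: A rule: less_induct)
  case less
  have gA: "hgood subseq (lists (A - {a}))" if "a \<in> A" for a
    using less(1)[of "A - {a}"] less(2) that card_Diff1_less[of A a] by auto
  show ?case
  proof (unfold hgood_def, intro allI impI)
    fix s :: "nat \<Rightarrow> _" assume s: "\<forall>i. s i \<in> lists A"
    show "\<exists>i j. i < j \<and> subseq (s i) (s j)"
    proof (cases "\<exists>j>0. subseq (s 0) (s j)")
      case True then show ?thesis by blast
    next
      case False
      have g: "hgood subseq (Nset A (s 0))" using s gA by (intro Nset_good) auto
      have "\<forall>i. s (Suc i) \<in> Nset A (s 0)" using s False by (auto simp: Nset_def)
      from hgoodD[OF g, of "\<lambda>i. s (Suc i)"] this obtain i j where "i < j" "subseq (s (Suc i)) (s (Suc j))" by blast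
      then show ?thesis using Suc_less_eq by blast
    qed
  qed
qed



definition fw :: "int list \<Rightarrow> int \<Rightarrow> int" where
  "fw w d = (if 1 \<le> d \<and> d \<le> int (length w) then w ! nat (d - 1)
     else if 1 \<le> - d \<and> - d \<le> int (length w) then - (w ! nat (- d - 1)) else 0)"

definition Pw :: "nat \<Rightarrow> int list \<Rightarrow> bool" where
  "Pw n w \<longleftrightarrow> set w \<subseteq> {- int n .. int n} \<and>
     (\<forall>e\<in>{1 .. int n}. \<exists>j<length w. w ! j = e \<and> (\<forall>i<j. \<bar>w ! i\<bar> < e))"

definition Sy :: "int list \<Rightarrow> int set" where
  "Sy w = insert 0 (set w \<union> uminus ` set w)"

lemma fw_odd: "fw w (- d) = - fw w d"
  unfolding fw_def by auto

lemma fw_zero[simp]: "fw w 0 = 0"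
  unfolding fw_def by auto

lemma fw_pos: "1 \<le> d \<Longrightarrow> d \<le> int (length w) \<Longrightarrow> fw w d = w ! nat (d - 1)"
  unfolding fw_def by auto

lemma fw_neg: "1 \<le> -d \<Longrightarrow> -d \<le> int (length w) \<Longrightarrow> fw w d = - (w ! nat (- d - 1))"
  unfolding fw_def by auto

lemma fw_out: "\<not> \<bar>d\<bar> \<le> int (length w) \<Longrightarrow> fw w d = 0"
  unfolding fw_def by auto

lemma fw_Suc: "j < length w \<Longrightarrow> fw w (int j + 1) = w ! j"
  by (simp add: fw_pos)

lemma fw_Suc': "j < length w \<Longrightarrow> fw w (1 + int j) = w ! j"
  by (simp add: fw_pos)

lemma nth_upto1: "j < m \<Longrightarrow> [1 .. int m] ! j = int j + 1"
  by (subst nth_upto) auto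

lemma map_fw: "map (fw w) [1 .. int (length w)] = w"
  by (rule nth_equalityI) (auto simp: nth_upto1 fw_Suc fw_Suc')

lemma fw_comp: "fw w \<circ> fw u = fw (map (fw w) u)"
proof
  fix d
  show "(fw w \<circ> fw u) d = fw (map (fw w) u) d"
  proof (cases "1 \<le> d \<and> d \<le> int (length u)")
    case True
    then show ?thesis by (simp add: fw_pos nat_less_iff)
  next
    case F: False
    show ?thesis
    proof (cases "1 \<le> -d \<and> -d \<le> int (length u)")
      case True
      then show ?thesis by (simp add: fw_neg fw_odd nat_less_iff)
    next
      case False
      then have "d = 0 \<or> \<not> \<bar>d\<bar> \<le> int (length u)" using F by auto
      then show ?thesis by (auto simp: fw_out)
    qed
  qed
qed

lemma fw_range: "fw w d \<in> Sy w"
  unfolding fw_def Sy_def by (auto simp: nat_less_iff)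

lemma fw_append: "\<bar>d\<bar> \<le> int (length w) \<Longrightarrow> fw (w @ v) d = fw w d"
  unfolding fw_def by (auto simp: nth_append nat_less_iff)

lemma fw_inj: "fw w = fw w' \<Longrightarrow> length w = length w' \<Longrightarrow> w = w'"
  by (metis map_fw)

lemma Sy_snoc: "Sy (w @ [x]) = insert x (insert (-x) (Sy w))"
  unfolding Sy_def by auto

lemma Sy_mono: "Sy w \<subseteq> Sy (w @ v)"
  unfolding Sy_def by auto

lemma Pw_0: "Pw 0 w \<longleftrightarrow> set w \<subseteq> {0}"
  unfolding Pw_def by auto

lemma Pw_Suc: "Pw (Suc n) w \<longleftrightarrow>
   (\<exists>v B. w = v @ [int n + 1] @ B \<and> Pw n v \<and> set B \<subseteq> {- (int n + 1) .. int n + 1})"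
proof
  assume P: "Pw (Suc n) w"
  have "int n + 1 \<in> {1 .. int (Suc n)}" by simp
  with P obtain j where j: "j < length w" "w ! j = int n + 1" "\<forall>i<j. \<bar>w ! i\<bar> < int n + 1"
    unfolding Pw_def by blast
  have sw: "set w \<subseteq> {- (int n + 1) .. int n + 1}" using P unfolding Pw_def by auto
  define v where "v = take j w"
  define B where "B = drop (Suc j) w"
  have w: "w = v @ [int n + 1] @ B" unfolding v_def B_def using j id_take_nth_drop by fastforce
  have lv: "length v = j" using j unfolding v_def by simp
  have vn: "v ! i = w ! i" if "i < j" for i using that unfolding v_def by simp
  have "Pw n v"
    unfolding Pw_def
  proof (intro conjI ballI)
    show "set v \<subseteq> {- int n .. int n}"
    proof
      fix x assume "x \<in> set v"
      then obtain i where "i < j" "x = w ! i" using lv vn by (metis in_set_conv_nth)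
      then show "x \<in> {- int n .. int n}" using j(3) by auto
    qed
  next
    fix e assume e: "e \<in> {1 .. int n}"
    then have "e \<in> {1 .. int (Suc n)}" by auto
    then obtain j' where j': "j' < length w" "w ! j' = e" "\<forall>i<j'. \<bar>w ! i\<bar> < e"
      using P unfolding Pw_def by blast
    have "j' < j"
    proof (rule ccontr)
      assume "\<not> j' < j"
      moreover have "j' \<noteq> j" using j j' e by auto
      ultimately have "j < j'" by simp
      then show False using j j' e by force
    qed
    then show "\<exists>j<length v. v ! j = e \<and> (\<forall>i<j. \<bar>v ! i\<bar> < e)" using j' lv vn by auto
  qed
  moreover have "set B \<subseteq> {- (int n + 1) .. int n + 1}" using sw unfolding B_def
    by (meson in_set_dropD subset_iff)
  ultimately show "\<exists>v B. w = v @ [int n + 1] @ B \<and> Pw n v \<and> set B \<subseteq> {- (int n + 1) .. int n + 1}"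
    using w by blast
next
  assume "\<exists>v B. w = v @ [int n + 1] @ B \<and> Pw n v \<and> set B \<subseteq> {- (int n + 1) .. int n + 1}"
  then obtain v B where w: "w = v @ [int n + 1] @ B" and v: "Pw n v" and B: "set B \<subseteq> {- (int n + 1) .. int n + 1}"
    by blast
  show "Pw (Suc n) w"
    unfolding Pw_def
  proof (intro conjI ballI)
    show "set w \<subseteq> {- int (Suc n) .. int (Suc n)}" using v B w unfolding Pw_def by auto
  next
    fix e assume e: "e \<in> {1 .. int (Suc n)}"
    show "\<exists>j<length w. w ! j = e \<and> (\<forall>i<j. \<bar>w ! i\<bar> < e)"
    proof (cases "e = int n + 1")
      case True
      have "\<forall>i<length v. \<bar>w ! i\<bar> < e"
      proof (intro allI impI)
        fix i assume "i < length v"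
        then have "w ! i \<in> set v" using w by (simp add: nth_append)
        then have "w ! i \<in> {- int n .. int n}" using v unfolding Pw_def by blast
        then show "\<bar>w ! i\<bar> < e" using True by auto
      qed
      then show ?thesis using w True by (intro exI[of _ "length v"]) (simp add: nth_append)
    next
      case False
      then have "e \<in> {1 .. int n}" using e by auto
      then obtain j where "j < length v" "v ! j = e" "\<forall>i<j. \<bar>v ! i\<bar> < e" using v unfolding Pw_def by blast
      then show ?thesis using w by (intro exI[of _ j]) (simp add: nth_append)
    qed
  qed
qed

lemma Pw_len: "Pw n w \<Longrightarrow> n \<le> length w"
proof (induction n arbitrary: w)
  case 0 then show ?case by simp
next
  case (Suc n)
  then obtain v B where "w = v @ [int n + 1] @ B" "Pw n v" using Pw_Suc by blast
  with Suc.IH[of v] show ?case by simp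
qed

lemma Pw_id: "Pw n w \<Longrightarrow> length w = n \<Longrightarrow> w = [1 .. int n]"
proof (induction n arbitrary: w)
  case 0 then show ?case by simp
next
  case (Suc n)
  then obtain v B where w: "w = v @ [int n + 1] @ B" and v: "Pw n v" using Pw_Suc by blast
  have "n \<le> length v" using Pw_len[OF v] .
  with w Suc.prems have "length v = n" "B = []" by auto
  with Suc.IH[OF v] w have "w = [1 .. int n] @ [int n + 1]" by simp
  also have "\<dots> = [1 .. int (Suc n)]" using upto_rec2[of 1 "int n + 1"] by (simp add: add.commute)
  finally show ?case .
qed

lemma abs_fw_lt:
  assumes "\<forall>i<j. \<bar>w ! i\<bar> < e" "e > 0" "\<bar>d\<bar> \<le> int j" "j \<le> length w"
  shows "\<bar>fw w d\<bar> < e"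
proof -
  consider "1 \<le> d" | "1 \<le> -d" | "d = 0" by linarith
  then show ?thesis
  proof cases
    case 1
    then have "fw w d = w ! nat (d - 1)" using assms by (simp add: fw_pos)
    moreover have "nat (d - 1) < j" using 1 assms by auto
    ultimately show ?thesis using assms by auto
  next
    case 2
    then have "fw w d = - (w ! nat (-d - 1))" using assms by (simp add: fw_neg)
    moreover have "nat (-d - 1) < j" using 2 assms by auto
    ultimately show ?thesis using assms by auto
  next
    case 3 then show ?thesis using assms by simp
  qed
qed

lemma Sy_sub: "set w \<subseteq> {- int n .. int n} \<Longrightarrow> Sy w \<subseteq> {- int n .. int n}"
  unfolding Sy_def by auto

lemma Pw_comp:
  assumes u: "Pw m u" and w: "Pw n w" and lw: "length w = m"
  shows "Pw n (map (fw w) u)"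
  unfolding Pw_def
proof (intro conjI ballI)
  have "Sy w \<subseteq> {- int n .. int n}" using w Sy_sub unfolding Pw_def by blast
  then show "set (map (fw w) u) \<subseteq> {- int n .. int n}" using fw_range by auto
next
  fix e assume e: "e \<in> {1 .. int n}"
  then obtain j where j: "j < length w" "w ! j = e" "\<forall>i<j. \<bar>w ! i\<bar> < e" using w unfolding Pw_def by blast
  have "int j + 1 \<in> {1 .. int m}" using j lw by auto
  then obtain q where q: "q < length u" "u ! q = int j + 1" "\<forall>i<q. \<bar>u ! i\<bar> < int j + 1"
    using u unfolding Pw_def by blast
  have "map (fw w) u ! q = e" using q j by (simp add: fw_Suc)
  moreover have "\<forall>i<q. \<bar>map (fw w) u ! i\<bar> < e"
  proof (intro allI impI)
    fix i assume "i < q"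
    then have "\<bar>u ! i\<bar> \<le> int j" using q by force
    then have "\<bar>fw w (u ! i)\<bar> < e" using abs_fw_lt[OF j(3)] e j(1) by auto
    then show "\<bar>map (fw w) u ! i\<bar> < e" using \<open>i < q\<close> q(1) by simp
  qed
  ultimately show "\<exists>j<length (map (fw w) u). map (fw w) u ! j = e \<and> (\<forall>i<j. \<bar>map (fw w) u ! i\<bar> < e)"
    using q(1) by (intro exI[of _ q]) auto
qed

lemma Pw_Sy: "Pw n w \<Longrightarrow> Sy w = {- int n .. int n}"
proof
  assume P: "Pw n w"
  then show "Sy w \<subseteq> {- int n .. int n}" using Sy_sub unfolding Pw_def by blast
  show "{- int n .. int n} \<subseteq> Sy w"
  proof
    fix x assume x: "x \<in> {- int n .. int n}"
    consider "x = 0" | "x \<in> {1 .. int n}" | "- x \<in> {1 .. int n}" using x by force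
    then show "x \<in> Sy w"
    proof cases
      case 2 then have "x \<in> set w" using P unfolding Pw_def by (metis nth_mem)
      then show ?thesis unfolding Sy_def by auto
    next
      case 3 then have "- x \<in> set w" using P unfolding Pw_def by (metis nth_mem)
      then show ?thesis unfolding Sy_def by (auto intro: image_eqI[of _ _ "-x"])
    qed (simp add: Sy_def)
  qed
qed



lemma preim_fin: "finite (preim m f e)"
  unfolding preim_def by (rule finite_subset[of _ "{- int m .. int m}"]) auto

lemma Pw_init:
  assumes P: "Pw n w" and j: "j < length w" "w ! j = e" "\<forall>i<j. \<bar>w ! i\<bar> < e" and e: "e \<ge> 1"
  shows "int j + 1 \<in> preim (length w) (fw w) e" "init (preim (length w) (fw w) e) = int j + 1"
proof -
  show mem: "int j + 1 \<in> preim (length w) (fw w) e"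
    unfolding preim_def using j by (auto simp: fw_Suc)
  have lb: "int j + 1 \<le> \<bar>d\<bar>" if d: "d \<in> preim (length w) (fw w) e" for d
  proof -
    have dm: "\<bar>d\<bar> \<le> int (length w)" "fw w d = e" using d unfolding preim_def by auto
    show ?thesis
    proof (rule ccontr)
      assume "\<not> int j + 1 \<le> \<bar>d\<bar>"
      then have "\<bar>d\<bar> \<le> int j" by simp
      then have "\<bar>fw w d\<bar> < e" using abs_fw_lt[OF j(3)] e j(1) by simp
      then show False using dm e by simp
    qed
  qed
  show "init (preim (length w) (fw w) e) = int j + 1"
    unfolding init_def
  proof (rule Min_eqI)
    show "finite (abs ` preim (length w) (fw w) e)" using preim_fin by blast
    show "\<And>y. y \<in> abs ` preim (length w) (fw w) e \<Longrightarrow> int j + 1 \<le> y" using lb by blast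
    show "int j + 1 \<in> abs ` preim (length w) (fw w) e" using mem by force
  qed
qed

lemma Pw_witness:
  assumes P: "Pw n w" and e: "e \<in> {1 .. int n}"
  obtains j where "j < length w" "w ! j = e" "\<forall>i<j. \<bar>w ! i\<bar> < e"
  using assms unfolding Pw_def by blast

lemma osb_B:
  assumes P: "Pw n w"
  shows "osb_mor (length w) n (fw w)"
  unfolding osb_mor_def
proof (intro conjI allI impI ballI)
  let ?m = "int (length w)"
  show "fw w ` {- ?m .. ?m} = {- int n .. int n}"
  proof
    have "Sy w \<subseteq> {- int n .. int n}" using P Sy_sub unfolding Pw_def by blast
    then show "fw w ` {- ?m .. ?m} \<subseteq> {- int n .. int n}" using fw_range by blast
    show "{- int n .. int n} \<subseteq> fw w ` {- ?m .. ?m}"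
    proof
      fix x assume x: "x \<in> {- int n .. int n}"
      consider "x = 0" | "x \<in> {1 .. int n}" | "- x \<in> {1 .. int n}" using x by force
      then show "x \<in> fw w ` {- ?m .. ?m}"
      proof cases
        case 1
        then show ?thesis by (intro image_eqI[of _ _ 0]) auto
      next
        case 2
        then obtain j where "j < length w" "w ! j = x" using P Pw_witness by metis
        then show ?thesis by (intro image_eqI[of _ _ "int j + 1"]) (auto simp: fw_Suc)
      next
        case 3
        then obtain j where j: "j < length w" "w ! j = -x" using P Pw_witness by metis
        then have "fw w (- (int j + 1)) = x" using fw_odd[of w "int j + 1"] fw_Suc[of j w] by simp
        then show ?thesis using j by (intro image_eqI[of _ _ "- (int j + 1)"]) auto
      qed
    qed
  qed
next
  fix e assume "\<not> \<bar>e\<bar> \<le> int (length w)"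
  then show "fw w e = 0" by (rule fw_out)
next
  fix e show "fw w (- e) = - fw w e" by (rule fw_odd)
next
  fix e assume e: "e \<in> {1 .. int n}"
  then obtain j where j: "j < length w" "w ! j = e" "\<forall>i<j. \<bar>w ! i\<bar> < e" using P Pw_witness by metis
  show "init (preim (length w) (fw w) e) \<in> preim (length w) (fw w) e"
    using Pw_init[OF P j] e by simp
next
  fix e e' assume e: "e \<in> {1 .. int n}" and e': "e' \<in> {1 .. int n}" and lt: "e < e'"
  obtain j where j: "j < length w" "w ! j = e" "\<forall>i<j. \<bar>w ! i\<bar> < e" using P e Pw_witness by metis
  obtain j' where j': "j' < length w" "w ! j' = e'" "\<forall>i<j'. \<bar>w ! i\<bar> < e'" using P e' Pw_witness by metis
  have "j < j'"
  proof (rule ccontr)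
    assume "\<not> j < j'"
    moreover have "j \<noteq> j'" using j j' lt by auto
    ultimately have "j' < j" by simp
    then show False using j j' lt e' by force
  qed
  then show "init (preim (length w) (fw w) e) < init (preim (length w) (fw w) e')"
    using Pw_init(2)[OF P j] Pw_init(2)[OF P j'] e e' by simp
qed

lemma osb_fw:
  assumes O: "osb_mor m n f"
  shows "f = fw (map f [1 .. int m])"
proof
  fix d
  let ?w = "map f [1 .. int m]"
  have lw: "length ?w = m" by simp
  have z: "\<And>e. \<not> \<bar>e\<bar> \<le> int m \<Longrightarrow> f e = 0" and od: "\<And>e. e \<in> {- int m .. int m} \<Longrightarrow> f (- e) = - f e"
    using O unfolding osb_mor_def by auto
  have f0: "f 0 = 0" using od[of 0] by simp
  consider "1 \<le> d \<and> d \<le> int m" | "1 \<le> -d \<and> -d \<le> int m" | "d = 0" | "\<not> \<bar>d\<bar> \<le> int m" by linarith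
  then show "f d = fw ?w d"
  proof cases
    case 1
    then have "fw ?w d = ?w ! nat (d - 1)" by (simp add: fw_pos)
    also have "\<dots> = f d" using 1 by (simp add: nth_upto1 nat_less_iff)
    finally show ?thesis by simp
  next
    case 2
    then have "fw ?w d = - (?w ! nat (- d - 1))" by (simp add: fw_neg)
    also have "\<dots> = - f (- d)" using 2 by (simp add: nth_upto1 nat_less_iff)
    also have "\<dots> = f d" using od[of "-d"] 2 by simp
    finally show ?thesis by simp
  next
    case 3 then show ?thesis using f0 by simp
  next
    case 4 then show ?thesis using z by (simp add: fw_out)
  qed
qed

lemma osb_Pw:
  assumes O: "osb_mor (length w) n (fw w)"
  shows "Pw n w"
proof -
  let ?m = "length w"
  let ?D = "\<lambda>e. preim ?m (fw w) e"
  have img: "fw w ` {- int ?m .. int ?m} = {- int n .. int n}"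
    and i1: "\<And>e. e \<in> {1 .. int n} \<Longrightarrow> init (?D e) \<in> ?D e"
    and i2: "\<And>e e'. e \<in> {1 .. int n} \<Longrightarrow> e' \<in> {1 .. int n} \<Longrightarrow> e < e' \<Longrightarrow> init (?D e) < init (?D e')"
    using O unfolding osb_mor_def by auto
  have sw: "set w \<subseteq> {- int n .. int n}"
  proof
    fix x assume "x \<in> set w"
    then obtain j where "j < ?m" "w ! j = x" by (metis in_set_conv_nth)
    then have "x = fw w (int j + 1)" "int j + 1 \<in> {- int ?m .. int ?m}" by (auto simp: fw_Suc)
    then show "x \<in> {- int n .. int n}" using img by blast
  qed
  have initle: "init (?D e) \<le> \<bar>d\<bar>" if "d \<in> ?D e" for d e
    unfolding init_def using that preim_fin by (intro Min_le) auto
  have mem_pos: "int i + 1 \<in> ?D (w ! i)" if "i < ?m" for i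
    using that unfolding preim_def by (auto simp: fw_Suc)
  have mem_neg: "- (int i + 1) \<in> ?D (- (w ! i))" if "i < ?m" for i
    using that unfolding preim_def using fw_odd[of w "int i + 1"] fw_Suc[of i w] by auto
  show ?thesis
    unfolding Pw_def
  proof (intro conjI ballI)
    show "set w \<subseteq> {- int n .. int n}" by (rule sw)
  next
    fix e assume e: "e \<in> {1 .. int n}"
    define t where "t = init (?D e)"
    have tD: "t \<in> ?D e" using i1[OF e] unfolding t_def .
    then have tm: "\<bar>t\<bar> \<le> int ?m" and ft: "fw w t = e" unfolding preim_def by auto
    have "t \<in> abs ` ?D e" unfolding t_def init_def using tD preim_fin by (intro Min_in) auto
    then have "t \<ge> 0" by auto
    moreover have "t \<noteq> 0" using ft e by auto
    ultimately have t1: "t \<ge> 1" by simp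
    define j where "j = nat (t - 1)"
    have j: "j < ?m" "int j + 1 = t" using t1 tm unfolding j_def by auto
    have wj: "w ! j = e" using ft j by (metis fw_Suc)
    have "\<forall>i<j. \<bar>w ! i\<bar> < e"
    proof (intro allI impI)
      fix i assume ij: "i < j"
      then have im: "i < ?m" using j by simp
      show "\<bar>w ! i\<bar> < e"
      proof (rule ccontr)
        assume "\<not> \<bar>w ! i\<bar> < e"
        then consider "w ! i = e" | "w ! i = - e" | "\<bar>w ! i\<bar> > e" by linarith
        then show False
        proof cases
          case 1
          then have "t \<le> \<bar>int i + 1\<bar>" using initle[of "int i + 1" e] mem_pos[OF im] unfolding t_def by simp
          then show False using ij j by simp
        next
          case 2
          then have "t \<le> \<bar>- (int i + 1)\<bar>" using initle[of "- (int i + 1)" e] mem_neg[OF im] unfolding t_def by simp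
          then show False using ij j by simp
        next
          case 3
          define e' where "e' = \<bar>w ! i\<bar>"
          have "w ! i \<in> set w" using im by simp
          then have "w ! i \<in> {- int n .. int n}" using sw by blast
          then have e'n: "e' \<in> {1 .. int n}" using 3 e unfolding e'_def by auto
          have "int i + 1 \<in> ?D e' \<or> - (int i + 1) \<in> ?D e'"
            using mem_pos[OF im] mem_neg[OF im] unfolding e'_def by (cases "w ! i \<ge> 0") auto
          then have "init (?D e') \<le> int i + 1" using initle by fastforce
          moreover have "t < init (?D e')" using i2[OF e e'n] 3 unfolding t_def e'_def by simp
          ultimately show False using ij j by simp
        qed
      qed
    qed
    then show "\<exists>j<length w. w ! j = e \<and> (\<forall>i<j. \<bar>w ! i\<bar> < e)" using j wj by blast
  qed
qed

lemma osb_A: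
  assumes "osb_mor m n f"
  shows "f = fw (map f [1 .. int m])" "Pw n (map f [1 .. int m])"
proof -
  show f: "f = fw (map f [1 .. int m])" using osb_fw[OF assms] .
  have "osb_mor (length (map f [1 .. int m])) n (fw (map f [1 .. int m]))"
    using assms f by simp
  then show "Pw n (map f [1 .. int m])" by (rule osb_Pw)
qed



fun Lr :: "int list \<Rightarrow> int list set" where
  "Lr [] = lists {0}"
| "Lr (x # r) = {u @ v | u v. u \<in> Lr r \<and> v \<in> {u' @ v' | u' v'. u' \<in> {[x]} \<and> v' \<in> lists (Sy (rev (x # r)))}}"

definition L :: "int list \<Rightarrow> int list set" where
  "L w = Lr (rev w)"

lemma L_Nil: "L [] = lists {0}"
  by (simp add: L_def)

lemma L_snoc0: "L (w @ [x]) = {u @ v | u v. u \<in> L w \<and> v \<in> {u' @ v' | u' v'. u' \<in> {[x]} \<and> v' \<in> lists (Sy (w @ [x]))}}"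
  by (simp add: L_def)

lemma L_snoc: "L (w @ [x]) = {u @ x # b | u b. u \<in> L w \<and> b \<in> lists (Sy (w @ [x]))}"
  unfolding L_snoc0 by auto

definition emb :: "int list \<Rightarrow> int list \<Rightarrow> bool" where
  "emb w w' \<longleftrightarrow> (\<exists>u. Pw (length w) u \<and> w' = map (fw w) u)"

lemma fw_img: "Sy w \<subseteq> fw w ` {- int (length w) .. int (length w)}"
proof
  fix y assume "y \<in> Sy w"
  then consider "y = 0" | j where "j < length w" "y = w ! j" | j where "j < length w" "y = - (w ! j)"
    unfolding Sy_def by (auto simp: in_set_conv_nth)
  then show "y \<in> fw w ` {- int (length w) .. int (length w)}"
  proof cases
    case 1 then show ?thesis by (intro image_eqI[of _ _ 0]) auto
  next
    case 2 then show ?thesis by (intro image_eqI[of _ _ "int j + 1"]) (auto simp: fw_Suc)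
  next
    case 3
    then have "fw w (- (int j + 1)) = y" using fw_odd[of w "int j + 1"] fw_Suc[of j w] by simp
    then show ?thesis using 3 by (intro image_eqI[of _ _ "- (int j + 1)"]) auto
  qed
qed

lemma fw_Nil: "fw [] d = 0"
  unfolding fw_def by auto

lemma emb_L: "emb w w' \<longleftrightarrow> w' \<in> L w"
proof (induction w arbitrary: w' rule: rev_induct)
  case Nil
  show ?case
  proof
    assume "emb [] w'"
    then obtain u where "Pw 0 u" "w' = map (fw []) u" unfolding emb_def by auto
    then show "w' \<in> L []" by (auto simp: L_Nil fw_Nil)
  next
    assume "w' \<in> L []"
    then have "set w' \<subseteq> {0}" by (auto simp: L_Nil)
    moreover have "map (fw []) w' = w'" using \<open>set w' \<subseteq> {0}\<close> by (induction w') (auto simp: fw_Nil)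
    ultimately show "emb [] w'" unfolding emb_def by (intro exI[of _ w']) (simp add: Pw_0)
  qed
next
  case (snoc x w)
  let ?m = "length w"
  let ?T = "{- (int ?m + 1) .. int ?m + 1}"
  have agree: "map (fw (w @ [x])) v = map (fw w) v" if "Pw ?m v" for v
  proof -
    have "set v \<subseteq> {- int ?m .. int ?m}" using that unfolding Pw_def by blast
    then have "\<forall>d\<in>set v. \<bar>d\<bar> \<le> int ?m" by (auto simp: abs_le_iff)
    then show ?thesis by (auto simp: fw_append)
  qed
  have fx: "fw (w @ [x]) (int ?m + 1) = x" using fw_Suc[of ?m "w @ [x]"] by simp
  show ?case
  proof
    assume "emb (w @ [x]) w'"
    then obtain u where u: "Pw (Suc ?m) u" "w' = map (fw (w @ [x])) u" unfolding emb_def by auto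
    then obtain v B where vB: "u = v @ [int ?m + 1] @ B" "Pw ?m v" "set B \<subseteq> ?T" using Pw_Suc by blast
    have "map (fw w) v \<in> L w" using snoc.IH vB(2) unfolding emb_def by blast
    moreover have "map (fw (w @ [x])) B \<in> lists (Sy (w @ [x]))" using fw_range by auto
    moreover have "w' = map (fw w) v @ x # map (fw (w @ [x])) B" using u vB agree fx by simp
    ultimately show "w' \<in> L (w @ [x])" unfolding L_snoc by blast
  next
    assume "w' \<in> L (w @ [x])"
    then obtain a b where ab: "w' = a @ x # b" "a \<in> L w" "b \<in> lists (Sy (w @ [x]))" unfolding L_snoc by blast
    obtain v where v: "Pw ?m v" "a = map (fw w) v" using snoc.IH ab(2) unfolding emb_def by blast
    have "Sy (w @ [x]) \<subseteq> fw (w @ [x]) ` ?T" using fw_img[of "w @ [x]"] by (simp add: add.commute)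
    then have "b \<in> lists (fw (w @ [x]) ` ?T)" using ab(3) by blast
    then obtain B where B: "B \<in> lists ?T" "b = map (fw (w @ [x])) B" unfolding lists_image by blast
    have "Pw (Suc ?m) (v @ [int ?m + 1] @ B)" using Pw_Suc v(1) B(1) by blast
    moreover have "w' = map (fw (w @ [x])) (v @ [int ?m + 1] @ B)" using ab v B agree fx by simp
    ultimately show "emb (w @ [x]) w'" unfolding emb_def by (intro exI[of _ "v @ [int ?m + 1] @ B"]) simp
  qed
qed

lemma L_len: "w' \<in> L w \<Longrightarrow> length w \<le> length w' \<and> (length w' = length w \<longrightarrow> w' = w)"
proof (induction w arbitrary: w' rule: rev_induct)
  case Nil then show ?case by (auto simp: L_Nil)
next
  case (snoc x w)
  then obtain a b where ab: "w' = a @ x # b" "a \<in> L w" unfolding L_snoc by blast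
  with snoc.IH[of a] show ?case by auto
qed

lemma L_refl: "w \<in> L w"
proof (induction w rule: rev_induct)
  case Nil then show ?case by (simp add: L_Nil)
next
  case (snoc x w) then show ?case unfolding L_snoc by force
qed

lemma L_app: "v \<in> L w \<Longrightarrow> y \<in> Sy w \<Longrightarrow> v @ [y] \<in> L w"
proof (cases w rule: rev_exhaust)
  case Nil
  assume "v \<in> L w" "y \<in> Sy w"
  then show ?thesis using Nil by (auto simp: L_Nil Sy_def)
next
  case (snoc w0 x)
  assume "v \<in> L w" "y \<in> Sy w"
  then have "v \<in> L (w0 @ [x])" using snoc by simp
  then obtain a b where "v = a @ x # b" "a \<in> L w0" "b \<in> lists (Sy (w0 @ [x]))" unfolding L_snoc by blast
  then show ?thesis using snoc \<open>y \<in> Sy w\<close> unfolding snoc L_snoc by (intro CollectI exI[of _ a] exI[of _ "b @ [y]"]) auto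
qed

lemma L_ordlang:
  assumes "set w \<subseteq> \<Sigma>" "0 \<in> \<Sigma>" "\<And>y. y \<in> \<Sigma> \<Longrightarrow> - y \<in> \<Sigma>"
  shows "L w \<in> ordlang \<Sigma>"
  using assms(1)
proof (induction w rule: rev_induct)
  case Nil
  then show ?case unfolding L_Nil using assms(2) by (intro ordlang.star) auto
next
  case (snoc x w)
  have "Sy (w @ [x]) \<subseteq> \<Sigma>" using snoc.prems assms(2,3) unfolding Sy_def by auto
  then have st: "lists (Sy (w @ [x])) \<in> ordlang \<Sigma>" by (rule ordlang.star)
  have "{[x]} \<in> ordlang \<Sigma>" using snoc.prems by (intro ordlang.single) auto
  from this st have "{u' @ v' | u' v'. u' \<in> {[x]} \<and> v' \<in> lists (Sy (w @ [x]))} \<in> ordlang \<Sigma>"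
    by (rule ordlang.concat)
  have "L w \<in> ordlang \<Sigma>" using snoc by simp
  from this \<open>{u' @ v' | u' v'. u' \<in> {[x]} \<and> v' \<in> lists (Sy (w @ [x]))} \<in> ordlang \<Sigma>\<close>
  show ?case unfolding L_snoc0 by (rule ordlang.concat)
qed

definition enc :: "int list \<Rightarrow> (int \<times> int set) list" where
  "enc w = map (\<lambda>i. (w ! i, Sy (take i w))) [0 ..< length w]"

lemma enc_Nil[simp]: "enc [] = []"
  by (simp add: enc_def)

lemma enc_snoc: "enc (w @ [x]) = enc w @ [(x, Sy w)]"
  unfolding enc_def by (auto simp: nth_append)

lemma length_enc[simp]: "length (enc w) = length w"
  by (simp add: enc_def)

lemma subseq_single: "subseq xs [a] \<Longrightarrow> xs = [] \<or> xs = [a]"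
  by (cases xs) (auto split: if_splits)

lemma enc_L: "subseq (enc w) (enc w') \<Longrightarrow> Sy w' \<subseteq> Sy w \<Longrightarrow> w' \<in> L w"
proof (induction w' arbitrary: w rule: rev_induct)
  case Nil
  then have "w = []" by (metis length_0_conv length_enc list_emb_Nil2)
  then show ?case by (simp add: L_Nil)
next
  case (snoc x w' w)
  from snoc.prems(1) have "subseq (enc w) (enc w' @ [(x, Sy w')])" by (simp add: enc_snoc)
  then obtain X1 X2 where X: "enc w = X1 @ X2" "subseq X1 (enc w')" "subseq X2 [(x, Sy w')]"
    by (rule subseq_appendE)
  have sub: "Sy w' \<subseteq> Sy w" using snoc.prems(2) Sy_mono by blast
  from subseq_single[OF X(3)] show ?case
  proof
    assume "X2 = []"
    then have "w' \<in> L w" using snoc.IH X sub by simp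
    moreover have "x \<in> Sy w" using snoc.prems(2) unfolding Sy_def by auto
    ultimately show ?thesis by (rule L_app)
  next
    assume X2: "X2 = [(x, Sy w')]"
    then have "w \<noteq> []" using X(1) by auto
    then obtain w0 y where w: "w = w0 @ [y]" by (metis rev_exhaust)
    then have "enc w0 = X1" "y = x" "Sy w0 = Sy w'" using X(1) X2 by (auto simp: enc_snoc)
    then have "w' \<in> L w0" using snoc.IH X by simp
    then show ?thesis unfolding w L_snoc \<open>y = x\<close> by force
  qed
qed

lemma enc_alpha: "Pw n w \<Longrightarrow> set (enc w) \<subseteq> {- int n .. int n} \<times> Pow {- int n .. int n}"
proof -
  assume P: "Pw n w"
  then have s: "set w \<subseteq> {- int n .. int n}" unfolding Pw_def by blast
  have "Sy (take i w) \<subseteq> {- int n .. int n}" for i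
    using s set_take_subset[of i w] by (intro Sy_sub) blast
  then show ?thesis using s unfolding enc_def by auto
qed



lemma iota_fw[simp]: "iota (length w, fw w) = w"
  by (simp add: iota_def map_fw)

lemma mors_rep:
  assumes "\<phi> \<in> mors_out n"
  shows "Pw n (iota \<phi>)" "\<phi> = (length (iota \<phi>), fw (iota \<phi>))"
proof -
  obtain m f where \<phi>: "\<phi> = (m, f)" "osb_mor m n f" using assms unfolding mors_out_def by auto
  show "Pw n (iota \<phi>)" using osb_A(2)[OF \<phi>(2)] \<phi>(1) by (simp add: iota_def)
  show "\<phi> = (length (iota \<phi>), fw (iota \<phi>))" using osb_A(1)[OF \<phi>(2)] \<phi>(1) by (simp add: iota_def)
qed

lemma mors_of: "Pw n w \<Longrightarrow> (length w, fw w) \<in> mors_out n"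
  unfolding mors_out_def using osb_B by auto

lemma mors_eq: "\<phi> \<in> mors_out n \<Longrightarrow> \<phi>' \<in> mors_out n' \<Longrightarrow> iota \<phi> = iota \<phi>' \<Longrightarrow> \<phi> = \<phi>'"
  by (metis mors_rep(2))


lemma op_le_L:
  assumes "\<phi> \<in> mors_out n" "\<phi>' \<in> mors_out n'"
  shows "op_le \<phi> \<phi>' \<longleftrightarrow> iota \<phi>' \<in> L (iota \<phi>)"
proof -
  define w where "w = iota \<phi>"
  define w' where "w' = iota \<phi>'"
  have \<phi>: "\<phi> = (length w, fw w)" using mors_rep(2)[OF assms(1)] unfolding w_def .
  have \<phi>': "\<phi>' = (length w', fw w')" using mors_rep(2)[OF assms(2)] unfolding w'_def .
  show ?thesis
  proof
    assume "op_le \<phi> \<phi>'"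
    then obtain g where g: "osb_mor (length w') (length w) g" "fw w' = fw w \<circ> g"
      unfolding op_le_def \<phi> \<phi>' by auto
    define u where "u = map g [1 .. int (length w')]"
    have u: "g = fw u" "Pw (length w) u" "length u = length w'"
      using osb_A[OF g(1)] unfolding u_def by auto
    have "fw w' = fw (map (fw w) u)" using g(2) u(1) fw_comp by simp
    then have "w' = map (fw w) u" using u(3) by (intro fw_inj) auto
    then have "emb w w'" unfolding emb_def using u by blast
    then show "iota \<phi>' \<in> L (iota \<phi>)" using emb_L unfolding w_def w'_def by blast
  next
    assume "iota \<phi>' \<in> L (iota \<phi>)"
    then have "emb w w'" using emb_L unfolding w_def w'_def by blast
    then obtain u where u: "Pw (length w) u" "w' = map (fw w) u" unfolding emb_def by blast
    have "osb_mor (length u) (length w) (fw u)" using osb_B[OF u(1)] .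
    moreover have "fw w' = fw w \<circ> fw u" using u(2) fw_comp by simp
    ultimately show "op_le \<phi> \<phi>'" unfolding op_le_def \<phi> \<phi>' using u(2) by auto
  qed
qed

lemma op_le_refl: "\<phi> \<in> mors_out n \<Longrightarrow> op_le \<phi> \<phi>"
  using op_le_L L_refl by blast

lemma op_le_antisym:
  assumes "\<phi> \<in> mors_out n" "\<phi>' \<in> mors_out n" "op_le \<phi> \<phi>'" "op_le \<phi>' \<phi>"
  shows "\<phi> = \<phi>'"
proof -
  have "iota \<phi>' \<in> L (iota \<phi>)" "iota \<phi> \<in> L (iota \<phi>')" using assms op_le_L by blast+
  then have "iota \<phi> = iota \<phi>'" using L_len by (metis le_antisym)
  then show ?thesis using assms mors_eq by blast
qed

lemma osb_comp:
  assumes g: "osb_mor k m g" and f: "osb_mor m n f"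
  shows "osb_mor k n (f \<circ> g)"
proof -
  define u where "u = map g [1 .. int k]"
  define w where "w = map f [1 .. int m]"
  have u: "g = fw u" "Pw m u" "length u = k" using osb_A[OF g] unfolding u_def by auto
  have w: "f = fw w" "Pw n w" "length w = m" using osb_A[OF f] unfolding w_def by auto
  have "Pw n (map (fw w) u)" using Pw_comp[OF u(2) w(2) w(3)] .
  then have "osb_mor (length (map (fw w) u)) n (fw (map (fw w) u))" by (rule osb_B)
  moreover have "f \<circ> g = fw (map (fw w) u)" unfolding u(1) w(1) by (rule fw_comp)
  moreover have "length (map (fw w) u) = k" using u(3) by simp
  ultimately show ?thesis by simp
qed

lemma op_le_trans: "op_le a b \<Longrightarrow> op_le b c \<Longrightarrow> op_le a c"
  unfolding op_le_def
proof (elim exE conjE)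
  fix g1 g2
  assume "osb_mor (fst b) (fst a) g1" "snd b = snd a \<circ> g1" "osb_mor (fst c) (fst b) g2" "snd c = snd b \<circ> g2"
  then show "\<exists>g. osb_mor (fst c) (fst a) g \<and> snd c = snd a \<circ> g"
    by (intro exI[of _ "g1 \<circ> g2"]) (auto simp: osb_comp comp_assoc)
qed

lemma op_le_fst: "op_le a b \<Longrightarrow> fst a \<le> fst b"
  unfolding op_le_def using osb_A(2) Pw_len by fastforce

lemma fw_id: "fw [1 .. int n] = (\<lambda>e. if \<bar>e\<bar> \<le> int n then e else 0)"
proof
  fix e
  consider "1 \<le> e \<and> e \<le> int n" | "1 \<le> -e \<and> -e \<le> int n" | "e = 0" | "\<not> \<bar>e\<bar> \<le> int n" by linarith
  then show "fw [1 .. int n] e = (if \<bar>e\<bar> \<le> int n then e else 0)"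
  proof cases
    case 1 then show ?thesis by (simp add: fw_pos)
  next
    case 2 then show ?thesis by (simp add: fw_neg)
  next
    case 3 then show ?thesis by simp
  next
    case 4 then show ?thesis by (simp add: fw_out)
  qed
qed

theorem directed: directed_OSB_op
  unfolding directed_OSB_op_def
proof (intro allI impI)
  fix n f assume "osb_mor n n f"
  from osb_A[OF this] have f: "f = fw (map f [1 .. int n])" and P: "Pw n (map f [1 .. int n])" by auto
  have eq: "map f [1 .. int n] = [1 .. int n]" using Pw_id[OF P] by simp
  have "f = fw [1 .. int n]" using f unfolding eq .
  then show "f = (\<lambda>e. if \<bar>e\<bar> \<le> int n then e else 0)" unfolding fw_id .
qed



definition kw :: "nat \<Rightarrow> int list \<Rightarrow> nat list" where
  "kw n w = map (\<lambda>x. nat (x + int n)) w"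

lemma lex_nth: "(xs, ys) \<in> lex r \<longleftrightarrow> length xs = length ys \<and>
   (\<exists>j<length xs. (\<forall>i<j. xs ! i = ys ! i) \<and> (xs ! j, ys ! j) \<in> r)"
proof
  assume "(xs, ys) \<in> lex r"
  then obtain P x y S S' where "length xs = length ys" "xs = P @ x # S" "ys = P @ y # S'" "(x, y) \<in> r"
    unfolding lex_conv by blast
  then show "length xs = length ys \<and> (\<exists>j<length xs. (\<forall>i<j. xs ! i = ys ! i) \<and> (xs ! j, ys ! j) \<in> r)"
    by (intro conjI exI[of _ "length P"]) (auto simp: nth_append)
next
  assume "length xs = length ys \<and> (\<exists>j<length xs. (\<forall>i<j. xs ! i = ys ! i) \<and> (xs ! j, ys ! j) \<in> r)"
  then obtain j where j: "length xs = length ys" "j < length xs" "\<forall>i<j. xs ! i = ys ! i" "(xs ! j, ys ! j) \<in> r"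
    by blast
  have t: "take j xs = take j ys" using j by (intro nth_equalityI) auto
  have "xs = take j xs @ xs ! j # drop (Suc j) xs" using j id_take_nth_drop by blast
  moreover have "ys = take j xs @ ys ! j # drop (Suc j) ys" using j t id_take_nth_drop by (metis)
  ultimately show "(xs, ys) \<in> lex r" unfolding lex_conv using j by blast
qed

lemma lex_irrefl_less: "(xs, xs) \<notin> lex less_than"
  unfolding lex_nth by auto

lemma fw_agree:
  assumes "\<forall>i<j. w ! i = w' ! i" "length w = length w'" "j \<le> length w" "\<bar>d\<bar> \<le> int j"
  shows "fw w d = fw w' d"
proof -
  consider "1 \<le> d" | "1 \<le> -d" | "d = 0" by linarith
  then show ?thesis
  proof cases
    case 1
    then have "nat (d - 1) < j" using assms by auto
    then show ?thesis using 1 assms by (simp add: fw_pos)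
  next
    case 2
    then have "nat (- d - 1) < j" using assms by auto
    then show ?thesis using 2 assms by (simp add: fw_neg)
  qed simp
qed

lemma inj_shift: "inj_on (\<lambda>x. nat (x + int n)) {- int n .. int n}"
  unfolding inj_on_def by auto

lemma kw_inj: "set w \<subseteq> {- int n .. int n} \<Longrightarrow> set w' \<subseteq> {- int n .. int n} \<Longrightarrow> kw n w = kw n w' \<Longrightarrow> w = w'"
  unfolding kw_def by (rule map_inj_on) (auto intro: inj_on_subset[OF inj_shift])

theorem G1: G1_OSB_op
  unfolding G1_OSB_op_def
proof (intro allI)
  fix n
  define A where "A = mors_out n"
  define key where "key \<phi> = kw n (iota \<phi>)" for \<phi>
  define r where "r = {(x, y). x \<in> A \<and> y \<in> A \<and> (x = y \<or> (key x, key y) \<in> lenlex less_than)}"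
  have key_inj: "x = y" if "x \<in> A" "y \<in> A" "key x = key y" for x y
  proof -
    have "set (iota x) \<subseteq> {- int n .. int n}" "set (iota y) \<subseteq> {- int n .. int n}"
      using mors_rep(1) that unfolding A_def Pw_def by blast+
    then have "iota x = iota y" using kw_inj that unfolding key_def by blast
    then show ?thesis using mors_eq that unfolding A_def by blast
  qed
  have tr: "trans (lenlex less_than)" by (intro lenlex_transI) (rule trans_less_than)
  have irr: "(xs, xs) \<notin> lenlex less_than" for xs by (rule lenlex_irreflexive) simp
  have wo: "well_order_on A r"
    unfolding well_order_on_def linear_order_on_def partial_order_on_def preorder_on_def
  proof (intro conjI)
    show "r \<subseteq> A \<times> A" unfolding r_def by auto
    show "refl_on A r" unfolding refl_on_def r_def by auto
    show "trans r" unfolding trans_def r_def using tr by (auto dest: transD)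
    show "antisym r" unfolding antisym_def r_def using tr irr by (auto dest: transD)
    show "total_on A r" unfolding total_on_def r_def
      using key_inj total_lenlex[OF total_less_than] unfolding total_on_def by blast
    have "r - Id \<subseteq> inv_image (lenlex less_than) key" unfolding r_def by auto
    then show "wf (r - Id)" by (rule wf_subset[OF wf_inv_image[OF wf_lenlex[OF wf_less_than]]])
  qed
  have compat: "((k, f \<circ> g), (k, f' \<circ> g)) \<in> r - Id"
    if f: "osb_mor m n f" and f': "osb_mor m n f'" and g: "osb_mor k m g" and inr: "((m, f), (m, f')) \<in> r - Id"
    for m k f f' g
  proof -
    define w where "w = map f [1 .. int m]"
    define w' where "w' = map f' [1 .. int m]"
    define u where "u = map g [1 .. int k]"
    have w: "f = fw w" "Pw n w" "length w = m" using osb_A[OF f] unfolding w_def by auto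
    have w': "f' = fw w'" "Pw n w'" "length w' = m" using osb_A[OF f'] unfolding w'_def by auto
    have u: "g = fw u" "Pw m u" "length u = k" using osb_A[OF g] unfolding u_def by auto
    have sw: "set w \<subseteq> {- int n .. int n}" "set w' \<subseteq> {- int n .. int n}" using w w' unfolding Pw_def by auto
    have "(kw n w, kw n w') \<in> lenlex less_than" using inr unfolding r_def key_def iota_def w_def w'_def by auto
    then have "(kw n w, kw n w') \<in> lex less_than" using w w' unfolding lenlex_conv kw_def by auto
    then obtain j where j0: "j < length (kw n w)" "\<forall>i<j. kw n w ! i = kw n w' ! i" "(kw n w ! j, kw n w' ! j) \<in> less_than"
      unfolding lex_nth by blast
    have "length (kw n w) = m" using w(3) by (simp add: kw_def)
    with j0 have j: "j < m" "\<forall>i<j. kw n w ! i = kw n w' ! i" "(kw n w ! j, kw n w' ! j) \<in> less_than"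
      by (simp_all only:)
    have wi: "w ! i \<in> {- int n .. int n}" "w' ! i \<in> {- int n .. int n}" if "i < m" for i
    proof -
      have "w ! i \<in> set w" "w' ! i \<in> set w'" using that w(3) w'(3) by simp_all
      then show "w ! i \<in> {- int n .. int n}" "w' ! i \<in> {- int n .. int n}" using sw by blast+
    qed
    have agree: "\<forall>i<j. w ! i = w' ! i"
    proof (intro allI impI)
      fix i assume "i < j"
      then have "nat (w ! i + int n) = nat (w' ! i + int n)" using j unfolding kw_def by (simp add: w(3) w'(3))
      then show "w ! i = w' ! i" using wi[of i] \<open>i < j\<close> j(1) by auto
    qed
    have ltj: "w ! j < w' ! j" using j(3) wi[OF j(1)] j(1) w(3) w'(3) unfolding kw_def by auto
    have "int j + 1 \<in> {1 .. int m}" using j by auto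
    then obtain q where q: "q < length u" "u ! q = int j + 1" "\<forall>i<q. \<bar>u ! i\<bar> < int j + 1"
      using u Pw_witness by metis
    define z where "z = map (fw w) u"
    define z' where "z' = map (fw w') u"
    have fg: "f \<circ> g = fw z" "f' \<circ> g = fw z'" unfolding z_def z'_def w(1) w'(1) u(1) by (rule fw_comp)+
    have lz: "length z = k" "length z' = k" unfolding z_def z'_def using u by auto
    have io: "iota (k, f \<circ> g) = z" "iota (k, f' \<circ> g) = z'" using fg lz iota_fw by metis+
    have zq: "z ! q = w ! j" "z' ! q = w' ! j" using q j w(3) w'(3) unfolding z_def z'_def by (auto simp: fw_Suc)
    have zi: "z ! i = z' ! i" if "i < q" for i
    proof -
      have "\<bar>u ! i\<bar> \<le> int j" using q that by force
      then have "fw w (u ! i) = fw w' (u ! i)" using fw_agree[OF agree] w(3) w'(3) j by simp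
      then show ?thesis using that q unfolding z_def z'_def by simp
    qed
    have qz: "q < length z" "q < length z'" using q(1) lz u(3) by auto
    have "(kw n z, kw n z') \<in> lex less_than"
      unfolding lex_nth kw_def using lz qz zi zq ltj wi[OF j(1)] by (intro conjI exI[of _ q]) auto
    then have lk: "(key (k, f \<circ> g), key (k, f' \<circ> g)) \<in> lenlex less_than"
      unfolding key_def io lenlex_conv using lz by (auto simp: kw_def)
    have mem: "(k, f \<circ> g) \<in> A" "(k, f' \<circ> g) \<in> A" unfolding A_def mors_out_def
      using osb_comp[OF g f] osb_comp[OF g f'] by auto
    have "(k, f \<circ> g) \<noteq> (k, f' \<circ> g)" using lk irr by auto
    then show ?thesis using lk mem unfolding r_def by auto
  qed
  show "\<exists>r. well_order_on (mors_out n) r \<and>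
      (\<forall>m k f f' g. osb_mor m n f \<longrightarrow> osb_mor m n f' \<longrightarrow> osb_mor k m g \<longrightarrow>
        ((m, f), (m, f')) \<in> r - Id \<longrightarrow> ((k, f \<circ> g), (k, f' \<circ> g)) \<in> r - Id)"
    using wo compat unfolding A_def by blast
qed



definition minis :: "nat \<Rightarrow> (nat \<times> (int \<Rightarrow> int)) set \<Rightarrow> (nat \<times> (int \<Rightarrow> int)) set" where
  "minis n I = {x \<in> I. \<forall>y \<in> I. op_le y x \<longrightarrow> op_le x y}"

lemma minis_rel:
  assumes I: "upclosed (mors_out n) op_le I" and x: "x \<in> minis n I" and y: "y \<in> minis n I"
    and le: "op_le x y"
  shows "x = y"
proof -
  have "I \<subseteq> mors_out n" using I unfolding upclosed_def by blast
  then have "x \<in> mors_out n" "y \<in> mors_out n" "x \<in> I" using x y unfolding minis_def by auto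
  moreover have "op_le y x" using y x le unfolding minis_def by auto
  ultimately show ?thesis using op_le_antisym le by blast
qed

lemma minis_finite:
  assumes I: "upclosed (mors_out n) op_le I"
  shows "finite (minis n I)"
proof (rule ccontr)
  assume inf: "infinite (minis n I)"
  then obtain x :: "nat \<Rightarrow> _" where x: "inj x" "range x \<subseteq> minis n I"
    using infinite_countable_subset by blast
  have sub: "I \<subseteq> mors_out n" using I unfolding upclosed_def by blast
  have xm: "x i \<in> mors_out n" for i using x sub unfolding minis_def by auto
  define \<Sigma> where "\<Sigma> = {- int n .. int n} \<times> Pow {- int n .. int n}"
  have "finite \<Sigma>" unfolding \<Sigma>_def by simp
  then have g: "hgood subseq (lists \<Sigma>)" by (rule higman)
  have "\<forall>i. enc (iota (x i)) \<in> lists \<Sigma>" using enc_alpha mors_rep(1)[OF xm] unfolding \<Sigma>_def by blast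
  from hgoodD[OF g, of "\<lambda>i. enc (iota (x i))", OF spec[OF this]] obtain i j
    where ij: "i < j" "subseq (enc (iota (x i))) (enc (iota (x j)))" by blast
  have "Sy (iota (x j)) = Sy (iota (x i))" using Pw_Sy mors_rep(1)[OF xm] by metis
  then have "iota (x j) \<in> L (iota (x i))" using enc_L ij by blast
  then have "op_le (x i) (x j)" using op_le_L xm by blast
  then have "x i = x j" using minis_rel[OF I] x by blast
  then show False using x(1) ij(1) by (metis inj_eq less_irrefl)
qed

theorem G2: G2_OSB_op
  unfolding G2_OSB_op_def noetherian_preorder_def
proof (intro allI impI)
  fix n I assume I: "upclosed (mors_out n) op_le I"
  have "{x \<in> I. \<forall>y\<in>I. op_le y x \<longrightarrow> op_le x y} = minis n I" unfolding minis_def by simp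
  then show "finite (eq_class (mors_out n) op_le ` {x \<in> I. \<forall>y\<in>I. op_le y x \<longrightarrow> op_le x y})"
    using minis_finite[OF I] by simp
qed

lemma ordlang_Union: "finite F \<Longrightarrow> (\<forall>X\<in>F. X \<in> ordlang \<Sigma>) \<Longrightarrow> \<Union>F \<in> ordlang \<Sigma>"
proof (induction F rule: finite_induct)
  case empty then show ?case by (simp add: ordlang.empty)
next
  case (insert X F) then show ?case by (simp add: ordlang.union)
qed

lemma iota_upclosed:
  assumes I: "upclosed (mors_out n) op_le I"
  shows "iota ` I = \<Union> ((\<lambda>x. L (iota x)) ` minis n I)"
proof
  have sub: "I \<subseteq> mors_out n" using I unfolding upclosed_def by blast
  show "iota ` I \<subseteq> \<Union> ((\<lambda>x. L (iota x)) ` minis n I)"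
  proof
    fix w assume "w \<in> iota ` I"
    then obtain \<phi> where \<phi>: "\<phi> \<in> I" "w = iota \<phi>" by blast
    have "\<phi> \<in> I \<and> op_le \<phi> \<phi>" using \<phi> sub op_le_refl by blast
    from ex_has_least_nat[of "\<lambda>x. x \<in> I \<and> op_le x \<phi>" \<phi> fst, OF this]
    obtain x where x: "x \<in> I \<and> op_le x \<phi>" and least: "\<forall>y. y \<in> I \<and> op_le y \<phi> \<longrightarrow> fst x \<le> fst y"
      by (elim exE conjE) (rule that, simp_all)
    have "x \<in> minis n I"
      unfolding minis_def
    proof (intro CollectI conjI ballI impI)
      show "x \<in> I" using x by blast
      fix y assume y: "y \<in> I" "op_le y x"
      then have "op_le y \<phi>" using x op_le_trans by blast
      then have "fst x \<le> fst y" using least y by blast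
      moreover have "fst y \<le> fst x" using op_le_fst y by blast
      ultimately have fe: "fst x = fst y" by simp
      have ym: "y \<in> mors_out n" "x \<in> mors_out n" using y x sub by blast+
      have "iota x \<in> L (iota y)" using op_le_L[OF ym(1) ym(2)] y(2) by simp
      moreover have "length (iota x) = length (iota y)" using fe by (simp add: iota_def)
      ultimately have "iota x = iota y" using L_len by blast
      then have "x = y" using mors_eq y x sub by blast
      then show "op_le x y" using op_le_refl y sub by blast
    qed
    moreover have "w \<in> L (iota x)" using op_le_L x \<phi> sub by blast
    ultimately show "w \<in> \<Union> ((\<lambda>x. L (iota x)) ` minis n I)" by blast
  qed
  show "\<Union> ((\<lambda>x. L (iota x)) ` minis n I) \<subseteq> iota ` I"
  proof
    fix w' assume "w' \<in> \<Union> ((\<lambda>x. L (iota x)) ` minis n I)"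
    then obtain x where x: "x \<in> minis n I" "w' \<in> L (iota x)" by blast
    have xI: "x \<in> I" "x \<in> mors_out n" using x sub unfolding minis_def by auto
    have "emb (iota x) w'" using x emb_L by blast
    then obtain u where u: "Pw (length (iota x)) u" "w' = map (fw (iota x)) u" unfolding emb_def by blast
    have "Pw n w'" using Pw_comp[OF u(1) mors_rep(1)[OF xI(2)]] u(2) by simp
    then have \<phi>': "(length w', fw w') \<in> mors_out n" by (rule mors_of)
    then have "op_le x (length w', fw w')" using op_le_L xI x by simp
    then have "(length w', fw w') \<in> I" using I xI \<phi>' unfolding upclosed_def by blast
    then show "w' \<in> iota ` I" by (metis iota_fw image_eqI)
  qed
qed

theorem lingual: O_lingual_OSB_op
  unfolding O_lingual_OSB_op_def
proof (intro allI conjI ballI impI)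
  fix n
  {
    fix \<phi> assume "\<phi> \<in> mors_out n"
    then show "set (iota \<phi>) \<subseteq> {- int n .. int n}" "length (iota \<phi>) = fst \<phi>"
      using mors_rep(1) unfolding Pw_def iota_def mors_out_def by auto
  }
  {
    fix \<phi> \<phi>' assume a: "\<phi> \<in> mors_out n" "\<phi>' \<in> mors_out n"
    show "iota \<phi> = iota \<phi>' \<longleftrightarrow> op_le \<phi> \<phi>' \<and> op_le \<phi>' \<phi>"
    proof
      assume "iota \<phi> = iota \<phi>'"
      then have "\<phi> = \<phi>'" using mors_eq a by blast
      then show "op_le \<phi> \<phi>' \<and> op_le \<phi>' \<phi>" using op_le_refl a by blast
    next
      assume "op_le \<phi> \<phi>' \<and> op_le \<phi>' \<phi>"
      then show "iota \<phi> = iota \<phi>'" using op_le_antisym a by blast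
    qed
  }
  fix I assume I: "upclosed (mors_out n) op_le I"
  have sub: "I \<subseteq> mors_out n" using I unfolding upclosed_def by blast
  have "\<forall>X \<in> (\<lambda>x. L (iota x)) ` minis n I. X \<in> ordlang {- int n .. int n}"
  proof
    fix X assume "X \<in> (\<lambda>x. L (iota x)) ` minis n I"
    then obtain x where "x \<in> minis n I" "X = L (iota x)" by blast
    then have "x \<in> mors_out n" using sub unfolding minis_def by auto
    then have "set (iota x) \<subseteq> {- int n .. int n}" using mors_rep(1) unfolding Pw_def by blast
    then show "X \<in> ordlang {- int n .. int n}" unfolding \<open>X = _\<close> by (rule L_ordlang) auto
  qed
  then show "iota ` I \<in> ordlang {- int n .. int n}"
    unfolding iota_upclosed[OF I] using minis_finite[OF I] by (intro ordlang_Union) auto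
qed

theorem mainTheorem10:
  shows "groebner_OSB_op \<and> O_lingual_OSB_op"
  unfolding groebner_OSB_op_def using directed G1 G2 lingual by blast

end
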